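(* Let $\Omega$ be a finite set, $\mathcal C$ the set of all functions from the power set of $\Omega$ to $\mathbb R$, $\mathcal P\subseteq\mathcal C$ the set of probability functions, $M$ finite, and let $s:\mathcal C\to[-\infty,M]^\Omega$ be a scoring rule that is quasi-strictly proper and continuous on $\mathcal C$. Then either $E_p s(p)$ is infinite for some $p\in\mathcal P$, or both: (i) for any sequence $(p_n)$ in $\mathcal P$ converging to some $p\in\mathcal P$ such that $s(p_n)$ is finite for all $n$ while $s(p)$ is not finite, $\lim_n E_{p_n}s(p_n)=E_p s(p)$; and (ii) the set $F=s[\mathcal P]\cap\mathbb R^\Omega$ of finite scores of probabilities is dense in $\partial^+\operatorname{Conv}F$.
   Context: $\mathcal C$ is topologized as $\mathbb R^{2^\Omega}$ and $[-\infty,M]^\Omega$ with the product of the usual extended-real topology. For $p\in\mathcal P$ and $f:\Omega\to[-\infty,\infty]$, $E_p f=\sum_{\omega:\,p(\{\omega\})\neq0}p(\{\omega\})f(\omega)$. $s$ is proper if $E_p s(p)\ge E_p s(c)$ for all $p\in\mathcal P$, $c\in\mathcal C$; quasi-strictly proper if moreover the inequality is strict whenever $c\in\mathcal C\setminus\mathcal P$. A score is finite if all its values are finite. $\mathcal P$ carries the topology in which $p_n\to p$ iff $p_n(\{\omega\})\to p(\{\omega\})$ for every $\omega$. With $\langle f,g\rangle=\sum_\omega f(\omega)g(\omega)$ on $\mathbb R^\Omega$, a boundary point $z$ of $G\subseteq\mathbb R^\Omega$ is positive-facing if there exists $v\in(0,\infty)^\Omega$ with $\langle v,w\rangle\le\langle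 v,z\rangle$ for all $w\in G$; $\partial^+G$ denotes the set of such points. $\operatorname{Conv}F$ is the convex hull of $F$; $F$ dense in $B$ means every open set meeting $B$ meets $F$. *)

theory Defs
  imports "HOL-Analysis.Analysis"
begin

text \<open>Omega is a finite type 'w. Credences C = functions 'w set => real (product topology
  from Function_Topology). Scores take values in 'w => ereal.\<close>

definition prob_fun :: "('w set \<Rightarrow> real) \<Rightarrow> bool" where
  "prob_fun c \<longleftrightarrow> (\<forall>A. c A \<ge> 0) \<and> c UNIV = 1 \<and>
     (\<forall>A B. A \<inter> B = {} \<longrightarrow> c (A \<union> B) = c A + c B)"

definition Probs :: "('w set \<Rightarrow> real) set" where
  "Probs = {c. prob_fun c}"

definition expect :: "('w::finite set \<Rightarrow> real) \<Rightarrow> ('w \<Rightarrow> ereal) \<Rightarrow> ereal" where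
  "expect p f = (\<Sum>\<omega>\<in>{\<omega>. p {\<omega>} \<noteq> 0}. ereal (p {\<omega>}) * f \<omega>)"

definition proper :: "(('w::finite set \<Rightarrow> real) \<Rightarrow> ('w \<Rightarrow> ereal)) \<Rightarrow> bool" where
  "proper s \<longleftrightarrow> (\<forall>p\<in>Probs. \<forall>c. expect p (s p) \<ge> expect p (s c))"

definition quasi_strictly_proper :: "(('w::finite set \<Rightarrow> real) \<Rightarrow> ('w \<Rightarrow> ereal)) \<Rightarrow> bool" where
  "quasi_strictly_proper s \<longleftrightarrow> proper s \<and>
     (\<forall>p\<in>Probs. \<forall>c. c \<notin> Probs \<longrightarrow> expect p (s p) > expect p (s c))"

definition finite_score :: "('w \<Rightarrow> ereal) \<Rightarrow> bool" where
  "finite_score f \<longleftrightarrow> (\<forall>\<omega>. \<bar>f \<omega>\<bar> \<noteq> \<infinity>)"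

definition ip :: "real^'w::finite \<Rightarrow> real^'w \<Rightarrow> real" where
  "ip f g = (\<Sum>\<omega>\<in>UNIV. f $ \<omega> * g $ \<omega>)"

definition pos_boundary :: "(real^'w::finite) set \<Rightarrow> (real^'w) set" where
  "pos_boundary G = {z \<in> frontier G. \<exists>v. (\<forall>\<omega>. v $ \<omega> > 0) \<and> (\<forall>w\<in>G. ip v w \<le> ip v z)}"

definition dense_in :: "('a::topological_space) set \<Rightarrow> 'a set \<Rightarrow> bool" where
  "dense_in F B \<longleftrightarrow> (\<forall>U. open U \<and> U \<inter> B \<noteq> {} \<longrightarrow> U \<inter> F \<noteq> {})"

definition finite_prob_scores :: "(('w::finite set \<Rightarrow> real) \<Rightarrow> ('w \<Rightarrow> ereal)) \<Rightarrow> (real^'w) set" where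
  "finite_prob_scores s = {(\<chi> \<omega>. real_of_ereal (s p \<omega>)) | p. p \<in> Probs \<and> finite_score (s p)}"

end

theory Submission
  imports Defs
begin

definition vprob :: "real^'w::finite \<Rightarrow> ('w set \<Rightarrow> real)" where
  "vprob x = (\<lambda>A. \<Sum>\<omega>\<in>A. x $ \<omega>)"

lemma vprob_single[simp]: "vprob x {\<omega>} = x $ \<omega>"
  by (simp add: vprob_def)

lemma prob_empty: "prob_fun p \<Longrightarrow> p {} = 0"
  unfolding prob_fun_def by (metis Un_empty inf.idem add_cancel_right_right)

lemma prob_sum:
  fixes p :: "'w::finite set \<Rightarrow> real"
  assumes "prob_fun p" shows "p A = (\<Sum>\<omega>\<in>A. p {\<omega>})"
proof -
  have "finite A" by simp
  then show ?thesis
  proof (induction A rule: finite_induct)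
    case empty then show ?case using prob_empty[OF assms] by simp
  next
    case (insert a A)
    have "p (insert a A) = p ({a} \<union> A)" by simp
    also have "\<dots> = p {a} + p A"
    proof -
      have "{a} \<inter> A = {}" using insert(2) by simp
      then show ?thesis using assms unfolding prob_fun_def by blast
    qed
    finally show ?case using insert(1,2,3) by (simp add: sum.insert)
  qed
qed

lemma prob_vprob: "p \<in> Probs \<Longrightarrow> vprob (\<chi> \<omega>. p {\<omega>}) = (p :: 'w::finite set \<Rightarrow> real)"
proof (rule ext)
  fix A assume "p \<in> Probs"
  then have "p A = (\<Sum>\<omega>\<in>A. p {\<omega>})" using prob_sum unfolding Probs_def by blast
  then show "vprob (\<chi> \<omega>. p {\<omega>}) A = p A" unfolding vprob_def by simp
qed

lemma vprob_prob:
  assumes "\<forall>\<omega>. x $ \<omega> \<ge> 0" "(\<Sum>\<omega>\<in>UNIV. x $ \<omega>) = 1"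
  shows "vprob (x :: real^'w::finite) \<in> Probs"
  unfolding Probs_def prob_fun_def vprob_def mem_Collect_eq
proof (intro conjI allI impI)
  fix A :: "'w set" show "0 \<le> (\<Sum>\<omega>\<in>A. x $ \<omega>)" using assms(1) by (simp add: sum_nonneg)
next
  show "(\<Sum>\<omega>\<in>UNIV. x $ \<omega>) = 1" by (rule assms(2))
next
  fix A B :: "'w set" assume "A \<inter> B = {}"
  then show "(\<Sum>\<omega>\<in>A \<union> B. x $ \<omega>) = (\<Sum>\<omega>\<in>A. x $ \<omega>) + (\<Sum>\<omega>\<in>B. x $ \<omega>)"
    by (simp add: sum.union_disjoint)
qed

lemma cont_coord:
  assumes "continuous_on UNIV (s :: ('w::finite set \<Rightarrow> real) \<Rightarrow> ('w \<Rightarrow> ereal))"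
  shows "continuous_on UNIV (\<lambda>x. s (vprob x) \<omega>)"
proof -
  have "continuous_on UNIV (vprob :: real^'w \<Rightarrow> _)"
    unfolding vprob_def by (intro continuous_on_coordinatewise_then_product continuous_intros)
  then have "continuous_on UNIV (s \<circ> vprob)"
    using assms by (rule continuous_on_compose[OF _ continuous_on_subset]) auto
  then show ?thesis using continuous_on_product_then_coordinatewise[of UNIV "s \<circ> vprob" \<omega>]
    by (simp add: o_def)
qed

lemma E1:
  assumes "\<forall>\<omega>. p {\<omega>} \<noteq> 0 \<longrightarrow> \<bar>f \<omega>\<bar> \<noteq> \<infinity>"
  shows "expect p f = ereal (\<Sum>\<omega>\<in>UNIV. p {\<omega>} * real_of_ereal (f \<omega>))"
proof -
  have "expect p f = (\<Sum>\<omega>\<in>{\<omega>. p {\<omega>} \<noteq> 0}. ereal (p {\<omega>} * real_of_ereal (f \<omega>)))"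
    unfolding expect_def using assms by (intro sum.cong) (auto simp: ereal_real')
  also have "\<dots> = ereal (\<Sum>\<omega>\<in>{\<omega>. p {\<omega>} \<noteq> 0}. p {\<omega>} * real_of_ereal (f \<omega>))" by simp
  also have "(\<Sum>\<omega>\<in>{\<omega>. p {\<omega>} \<noteq> 0}. p {\<omega>} * real_of_ereal (f \<omega>)) = (\<Sum>\<omega>\<in>UNIV. p {\<omega>} * real_of_ereal (f \<omega>))"
    by (intro sum.mono_neutral_left) auto
  finally show ?thesis .
qed

lemma E2:
  fixes p :: "'w::finite set \<Rightarrow> real"
  assumes "\<forall>\<omega>. p {\<omega>} \<ge> 0" "\<forall>\<omega>. f \<omega> \<noteq> \<infinity>" "\<bar>expect p f\<bar> \<noteq> \<infinity>" "p {\<omega>} \<noteq> 0"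
  shows "\<bar>f \<omega>\<bar> \<noteq> \<infinity>"
proof
  assume "\<bar>f \<omega>\<bar> = \<infinity>"
  then have fm: "f \<omega> = -\<infinity>" using assms(2) by auto
  have pp: "p {\<omega>} > 0" using assms(1,4) by (metis less_eq_real_def)
  let ?S = "{\<omega>. p {\<omega>} \<noteq> 0}"
  have "expect p f = ereal (p {\<omega>}) * f \<omega> + (\<Sum>\<omega>'\<in>?S - {\<omega>}. ereal (p {\<omega>'}) * f \<omega>')"
    unfolding expect_def using assms(4) by (subst sum.remove[of _ \<omega>]) auto
  moreover have "(\<Sum>\<omega>'\<in>?S - {\<omega>}. ereal (p {\<omega>'}) * f \<omega>') \<noteq> \<infinity>"
    unfolding sum_Pinfty using assms(1,2) by (auto simp: ereal_mult_eq_PInfty not_less[symmetric])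
  ultimately have "expect p f = -\<infinity>" using fm pp by auto
  then show False using assms(3) by simp
qed

lemma ip_inner: "ip x w = x \<bullet> w"
  by (simp add: ip_def inner_vec_def)


lemma part1:
  fixes s :: "('w::finite set \<Rightarrow> real) \<Rightarrow> ('w \<Rightarrow> ereal)" and M :: real
  assumes bounded: "\<forall>c \<omega>. s c \<omega> \<le> ereal M"
    and prp: "\<And>p c. p \<in> Probs \<Longrightarrow> expect p (s c) \<le> expect p (s p)"
    and cont: "continuous_on UNIV s"
    and H: "\<And>p. p \<in> Probs \<Longrightarrow> \<bar>expect p (s p)\<bar> \<noteq> \<infinity>"
    and ps: "\<forall>n. ps n \<in> Probs" and p: "p \<in> Probs"
    and conv: "\<forall>\<omega>. (\<lambda>n. ps n {\<omega>}) \<longlonglongrightarrow> p {\<omega>}"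
    and fs: "\<forall>n. finite_score (s (ps n))"
  shows "(\<lambda>n. expect (ps n) (s (ps n))) \<longlonglongrightarrow> expect p (s p)"
proof -
  define r where "r n \<omega> = real_of_ereal (s (ps n) \<omega>)" for n \<omega>
  define a where "a n = (\<Sum>\<omega>\<in>UNIV. ps n {\<omega>} * r n \<omega>)" for n
  define L where "L = (\<Sum>\<omega>\<in>UNIV. p {\<omega>} * real_of_ereal (s p \<omega>))"
  have pnn: "\<And>\<omega>. p {\<omega>} \<ge> 0" using p unfolding Probs_def prob_fun_def by blast
  have psnn: "\<And>n \<omega>. ps n {\<omega>} \<ge> 0" using ps unfolding Probs_def prob_fun_def by blast
  have ninf: "\<And>c \<omega>. s c \<omega> \<noteq> \<infinity>" using bounded by (metis PInfty_neq_ereal(1) ereal_infty_less_eq(1))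
  have fp: "\<And>\<omega>. p {\<omega>} \<noteq> 0 \<Longrightarrow> \<bar>s p \<omega>\<bar> \<noteq> \<infinity>"
    by (rule E2[of p "s p"]) (use pnn ninf H[OF p] in auto)
  have eL: "expect p (s p) = ereal L" unfolding L_def using fp by (intro E1) blast
  have ea: "\<And>n. expect (ps n) (s (ps n)) = ereal (a n)"
    unfolding a_def r_def using fs unfolding finite_score_def by (intro E1) auto
  have sconv: "\<And>\<omega>. (\<lambda>n. s (ps n) \<omega>) \<longlonglongrightarrow> s p \<omega>"
  proof -
    fix \<omega>
    have "(\<lambda>n. \<chi> \<omega>. ps n {\<omega>}) \<longlonglongrightarrow> (\<chi> \<omega>. p {\<omega>})" by (rule vec_tendstoI) (simp add: conv)
    then have "(\<lambda>n. s (vprob (\<chi> \<omega>. ps n {\<omega>})) \<omega>) \<longlonglongrightarrow> s (vprob (\<chi> \<omega>. p {\<omega>})) \<omega>"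
      by (rule continuous_on_tendsto_compose[OF cont_coord[OF cont]]) auto
    then show "(\<lambda>n. s (ps n) \<omega>) \<longlonglongrightarrow> s p \<omega>" using prob_vprob[OF p] prob_vprob[OF ps[rule_format]] by simp
  qed
  have rM: "\<And>n \<omega>. r n \<omega> \<le> M"
  proof -
    fix n \<omega>
    have "\<bar>s (ps n) \<omega>\<bar> \<noteq> \<infinity>" using fs finite_score_def by metis
    then have "s (ps n) \<omega> = ereal (r n \<omega>)" unfolding r_def by (simp add: ereal_real')
    then show "r n \<omega> \<le> M" using bounded by (metis ereal_less_eq(3))
  qed
  define e where "e n m = (\<Sum>\<omega>\<in>UNIV. ps n {\<omega>} * r m \<omega>)" for n m
  have ea_le: "\<And>n m. e n m \<le> a n"
  proof -
    fix n m
    have "expect (ps n) (s (ps m)) = ereal (e n m)"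
      unfolding e_def r_def using fs unfolding finite_score_def by (intro E1) auto
    then show "e n m \<le> a n" using prp[of "ps n" "ps m"] ps ea[of n] by simp
  qed
  define E where "E m = (\<Sum>\<omega>\<in>UNIV. p {\<omega>} * r m \<omega>)" for m
  have eE: "\<And>m. (\<lambda>n. e n m) \<longlonglongrightarrow> E m"
    unfolding e_def E_def by (intro tendsto_intros conv[rule_format])
  have coordL: "\<And>\<omega>. p {\<omega>} \<noteq> 0 \<Longrightarrow> (\<lambda>m. r m \<omega>) \<longlonglongrightarrow> real_of_ereal (s p \<omega>)"
  proof -
    fix \<omega> assume "p {\<omega>} \<noteq> 0"
    then have "s p \<omega> = ereal (real_of_ereal (s p \<omega>))" using fp by (simp add: ereal_real')
    then show "(\<lambda>m. r m \<omega>) \<longlonglongrightarrow> real_of_ereal (s p \<omega>)"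
      unfolding r_def using sconv[of \<omega>] by (metis lim_real_of_ereal)
  qed
  have EL: "E \<longlonglongrightarrow> L"
    unfolding E_def L_def
  proof (intro tendsto_sum)
    fix \<omega> :: 'w
    show "(\<lambda>m. p {\<omega>} * r m \<omega>) \<longlonglongrightarrow> p {\<omega>} * real_of_ereal (s p \<omega>)"
    proof (cases "p {\<omega>} = 0")
      case True then show ?thesis by simp
    next
      case False then show ?thesis by (intro tendsto_mult_left coordL)
    qed
  qed
  define b where "b n = (\<Sum>\<omega>\<in>UNIV. if p {\<omega>} = 0 then ps n {\<omega>} * M else ps n {\<omega>} * r n \<omega>)" for n
  have ab: "\<And>n. a n \<le> b n"
    unfolding a_def b_def by (intro sum_mono) (auto intro: mult_left_mono rM psnn)
  have bL: "b \<longlonglongrightarrow> L"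
    unfolding b_def L_def
  proof (intro tendsto_sum)
    fix \<omega> :: 'w
    show "(\<lambda>n. if p {\<omega>} = 0 then ps n {\<omega>} * M else ps n {\<omega>} * r n \<omega>) \<longlonglongrightarrow> p {\<omega>} * real_of_ereal (s p \<omega>)"
    proof (cases "p {\<omega>} = 0")
      case True
      have "(\<lambda>n. ps n {\<omega>} * M) \<longlonglongrightarrow> p {\<omega>} * M" by (intro tendsto_intros conv[rule_format])
      then show ?thesis using True by simp
    next
      case False then show ?thesis by (simp, intro tendsto_mult conv[rule_format] coordL)
    qed
  qed
  have "a \<longlonglongrightarrow> L"
  proof (rule order_tendstoI)
    fix y assume "y < L"
    then have "eventually (\<lambda>m. y < E m) sequentially" using order_tendstoD(1)[OF EL] by blast
    then obtain m where "y < E m" by (metis eventually_sequentially order.refl)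
    then have "eventually (\<lambda>n. y < e n m) sequentially" using order_tendstoD(1)[OF eE] by blast
    then show "eventually (\<lambda>n. y < a n) sequentially"
      by (rule eventually_mono) (use ea_le in \<open>fastforce intro: less_le_trans\<close>)
  next
    fix y assume "L < y"
    then have "eventually (\<lambda>n. b n < y) sequentially" using order_tendstoD(2)[OF bL] by blast
    then show "eventually (\<lambda>n. a n < y) sequentially"
      by (rule eventually_mono) (use ab in \<open>fastforce intro: le_less_trans\<close>)
  qed
  then show ?thesis unfolding eL ea by (rule tendsto_ereal)
qed


lemma ip_scale: "ip (c *\<^sub>R v) w = c * ip v w"
  by (simp add: ip_def sum_distrib_left mult.assoc)

lemma ip_lin: "ip (q + t *\<^sub>R d) w = ip q w + t * ip d w"
  by (simp add: ip_def sum_distrib_left sum.distrib algebra_simps)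

lemma ip_axis: "ip (axis \<omega> 1 - q) w = w $ \<omega> - ip q w"
proof -
  have "(\<Sum>i\<in>UNIV. axis \<omega> 1 $ i * w $ i) = (\<Sum>i\<in>UNIV. if i = \<omega> then w $ i else 0)"
    by (intro sum.cong) (auto simp: axis_def)
  also have "\<dots> = w $ \<omega>" by simp
  finally show ?thesis unfolding ip_def by (simp add: left_diff_distrib sum_subtractf)
qed

lemma part2:
  fixes s :: "('w::finite set \<Rightarrow> real) \<Rightarrow> ('w \<Rightarrow> ereal)" and M :: real
  assumes bounded: "\<forall>c \<omega>. s c \<omega> \<le> ereal M"
    and prp: "\<And>p c. p \<in> Probs \<Longrightarrow> expect p (s c) \<le> expect p (s p)"
    and cont: "continuous_on UNIV s"
    and H: "\<And>p. p \<in> Probs \<Longrightarrow> \<bar>expect p (s p)\<bar> \<noteq> \<infinity>"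
  shows "dense_in (finite_prob_scores s) (pos_boundary (convex hull (finite_prob_scores s)))"
proof -
  define F where "F = finite_prob_scores s"
  have ninf: "\<And>c \<omega>. s c \<omega> \<noteq> \<infinity>" using bounded by (metis PInfty_neq_ereal(1) ereal_infty_less_eq(1))
  have fin: "\<And>p. p \<in> Probs \<Longrightarrow> \<forall>\<omega>. p {\<omega>} \<noteq> 0 \<longrightarrow> \<bar>s p \<omega>\<bar> \<noteq> \<infinity>"
  proof (intro allI impI)
    fix p :: "'w set \<Rightarrow> real" and \<omega> assume p: "p \<in> Probs" and "p {\<omega>} \<noteq> 0"
    have pnn: "\<forall>\<omega>. p {\<omega>} \<ge> 0" using p unfolding Probs_def prob_fun_def by blast
    show "\<bar>s p \<omega>\<bar> \<noteq> \<infinity>"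
      by (rule E2[of p "s p"]) (use pnn ninf H[OF p] \<open>p {\<omega>} \<noteq> 0\<close> in auto)
  qed
  define g where "g x = real_of_ereal (expect (vprob x) (s (vprob x)))" for x :: "real^'w"
  have C1: "ip x w \<le> g x" if x0: "\<forall>\<omega>. x $ \<omega> \<ge> 0" and x1: "(\<Sum>\<omega>\<in>UNIV. x $ \<omega>) = 1"
    and w: "w \<in> closure (convex hull F)" for x w
  proof -
    have xP: "vprob x \<in> Probs" using vprob_prob[OF x0 x1] .
    have "F \<subseteq> {w. x \<bullet> w \<le> g x}"
    proof
      fix w assume "w \<in> F"
      then obtain p where p: "p \<in> Probs" "finite_score (s p)" and wdef: "w = (\<chi> \<omega>. real_of_ereal (s p \<omega>))"
        unfolding F_def finite_prob_scores_def by blast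
      have "expect (vprob x) (s p) = ereal (ip x w)"
        unfolding wdef ip_def using p(2) unfolding finite_score_def by (subst E1) auto
      moreover have "expect (vprob x) (s (vprob x)) = ereal (g x)"
        unfolding g_def using H[OF xP] by (simp add: ereal_real')
      ultimately have "ip x w \<le> g x" using prp[OF xP, of p] by simp
      then show "w \<in> {w. x \<bullet> w \<le> g x}" by (simp add: ip_inner)
    qed
    then have "convex hull F \<subseteq> {w. x \<bullet> w \<le> g x}"
      by (intro hull_minimal) (auto simp: convex_halfspace_le)
    then have "closure (convex hull F) \<subseteq> {w. x \<bullet> w \<le> g x}"
      by (intro closure_minimal) (auto simp: closed_halfspace_le)
    then show ?thesis using w by (auto simp: ip_inner)
  qed
  have "z \<in> F" if z: "z \<in> pos_boundary (convex hull F)" for z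
  proof -
    obtain v where zfr: "z \<in> frontier (convex hull F)" and vpos: "\<forall>\<omega>. v $ \<omega> > 0"
      and sup: "\<forall>w\<in>convex hull F. ip v w \<le> ip v z"
      using z unfolding pos_boundary_def by blast
    have zcl: "z \<in> closure (convex hull F)" using zfr by (simp add: frontier_def)
    define V where "V = (\<Sum>\<omega>\<in>UNIV. v $ \<omega>)"
    have V: "V > 0" unfolding V_def using vpos by (intro sum_pos) auto
    define q where "q = (1 / V) *\<^sub>R v"
    have qpos: "\<And>\<omega>. q $ \<omega> > 0" unfolding q_def using vpos V by simp
    have q1: "(\<Sum>\<omega>\<in>UNIV. q $ \<omega>) = 1" unfolding q_def using V by (simp add: V_def[symmetric] sum_divide_distrib[symmetric])
    have qle1: "\<And>\<omega>. q $ \<omega> \<le> 1"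
      using q1 member_le_sum[of _ UNIV "\<lambda>\<omega>. q $ \<omega>"] qpos by (metis UNIV_I finite less_eq_real_def)
    define Q where "Q = vprob q"
    have QP: "Q \<in> Probs" unfolding Q_def using qpos q1 by (intro vprob_prob) (auto simp: less_eq_real_def)
    have Qfin: "\<And>\<omega>. \<bar>s Q \<omega>\<bar> \<noteq> \<infinity>" using fin[OF QP] qpos unfolding Q_def by (metis less_irrefl vprob_single)
    define r where "r = (\<chi> \<omega>. real_of_ereal (s Q \<omega>))"
    have rF: "r \<in> F" unfolding F_def finite_prob_scores_def r_def using QP Qfin
      unfolding finite_score_def by blast
    have "ip v r \<le> ip v z" using sup hull_inc[OF rF] by blast
    then have qrz: "ip q r \<le> ip q z" unfolding q_def ip_scale using V by (simp add: divide_right_mono)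
    have gq: "g q = ip q r"
    proof -
      have "expect Q (s Q) = ereal (ip q r)"
        unfolding r_def ip_def Q_def using Qfin unfolding Q_def by (subst E1) auto
      then show ?thesis unfolding g_def Q_def by simp
    qed
    have "ip q z \<le> g q" using C1[OF _ q1 zcl] qpos by (simp add: less_eq_real_def)
    then have eq: "ip q z = ip q r" using qrz gq by simp
    have "z $ \<omega> = r $ \<omega>" for \<omega>
    proof -
      define d :: "real^'w" where "d = axis \<omega> 1 - q"
      define xt where "xt t = q + t *\<^sub>R d" for t :: real
      define rt where "rt t = (\<chi> \<omega>'. real_of_ereal (s (vprob (xt t)) \<omega>'))" for t
      have key: "t * ip d z \<le> t * ip d (rt t)" if t: "\<bar>t\<bar> < q $ \<omega>" for t
      proof -
        have xtc: "xt t $ \<omega>' = q $ \<omega>' + t * ((if \<omega>' = \<omega> then 1 else 0) - q $ \<omega>')" for \<omega>'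
          unfolding xt_def d_def by (simp add: axis_def)
        have xpos: "xt t $ \<omega>' > 0" for \<omega>'
        proof (cases "\<omega>' = \<omega>")
          case True
          have "\<bar>t * (1 - q $ \<omega>)\<bar> \<le> \<bar>t\<bar>" using qle1[of \<omega>] qpos[of \<omega>]
            by (simp add: abs_mult mult_left_le)
          then show ?thesis using True xtc[of \<omega>'] t abs_ge_minus_self[of "t * (1 - q $ \<omega>)"] by simp
        next
          case False
          have "\<bar>t * q $ \<omega>'\<bar> < q $ \<omega>'" using qle1[of \<omega>] qpos[of \<omega>'] t
            by (simp add: abs_mult)
          then show ?thesis using False xtc[of \<omega>'] abs_ge_minus_self[of "t * q $ \<omega>'"] by simp
        qed
        have xt1: "(\<Sum>\<omega>'\<in>UNIV. xt t $ \<omega>') = 1"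
          unfolding xtc using q1 by (simp add: sum.distrib sum_subtractf sum_distrib_left[symmetric])
        have xP: "vprob (xt t) \<in> Probs" using xpos xt1 by (intro vprob_prob) (auto simp: less_eq_real_def)
        have xfin: "\<And>\<omega>'. \<bar>s (vprob (xt t)) \<omega>'\<bar> \<noteq> \<infinity>"
          using fin[OF xP] xpos by (metis less_irrefl vprob_single)
        have a: "ip (xt t) z \<le> ip (xt t) (rt t)"
        proof -
          have "expect (vprob (xt t)) (s (vprob (xt t))) = ereal (ip (xt t) (rt t))"
            unfolding rt_def ip_def using xfin by (subst E1) auto
          then have "g (xt t) = ip (xt t) (rt t)" unfolding g_def by simp
          then show ?thesis using C1[OF _ xt1 zcl] xpos by (simp add: less_eq_real_def)
        qed
        have b: "ip q (rt t) \<le> ip q r"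
        proof -
          have "expect Q (s (vprob (xt t))) = ereal (ip q (rt t))"
            unfolding rt_def ip_def Q_def using xfin by (subst E1) auto
          moreover have "expect Q (s Q) = ereal (ip q r)"
            unfolding r_def ip_def Q_def using Qfin unfolding Q_def by (subst E1) auto
          ultimately show ?thesis using prp[OF QP, of "vprob (xt t)"] by simp
        qed
        show ?thesis using a b eq unfolding xt_def ip_lin by linarith
      qed
      have lim: "((\<lambda>t. ip d (rt t)) \<longlongrightarrow> ip d r) (at 0 within S)" for S
      proof -
        have "((\<lambda>t. xt t) \<longlongrightarrow> q) (at 0 within S)"
          unfolding xt_def by (rule tendsto_eq_intros) (auto intro!: tendsto_eq_intros)
        have coord: "((\<lambda>t. real_of_ereal (s (vprob (xt t)) \<omega>')) \<longlongrightarrow> r $ \<omega>') (at 0 within S)" for \<omega>'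
        proof -
          have "((\<lambda>t. s (vprob (xt t)) \<omega>') \<longlongrightarrow> s (vprob q) \<omega>') (at 0 within S)"
            using \<open>((\<lambda>t. xt t) \<longlongrightarrow> q) (at 0 within S)\<close>
            by (rule continuous_on_tendsto_compose[OF cont_coord[OF cont]]) auto
          moreover have "s (vprob q) \<omega>' = ereal (r $ \<omega>')"
            unfolding r_def using Qfin[of \<omega>'] unfolding Q_def by (simp add: ereal_real')
          ultimately show ?thesis by (metis lim_real_of_ereal)
        qed
        show ?thesis unfolding ip_def rt_def by (simp, intro tendsto_intros coord)
      qed
      have r1: "ip d z \<le> ip d r"
      proof (rule tendsto_lowerbound[OF lim[of "{0<..}"]])
        show "\<forall>\<^sub>F t in at_right 0. ip d z \<le> ip d (rt t)"
          unfolding eventually_at_right_field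
        proof (intro exI[of _ "q $ \<omega>"] conjI allI impI)
          show "0 < q $ \<omega>" by (rule qpos)
          fix t :: real assume "0 < t" "t < q $ \<omega>"
          then show "ip d z \<le> ip d (rt t)" using key[of t] by simp
        qed
      qed simp
      have r2: "ip d r \<le> ip d z"
      proof (rule tendsto_upperbound[OF lim[of "{..<0}"]])
        show "\<forall>\<^sub>F t in at_left 0. ip d (rt t) \<le> ip d z"
          unfolding eventually_at_left_field
        proof (intro exI[of _ "- q $ \<omega>"] conjI allI impI)
          show "- q $ \<omega> < 0" using qpos[of \<omega>] by simp
          fix t :: real assume "- q $ \<omega> < t" "t < 0"
          then show "ip d (rt t) \<le> ip d z" using key[of t] by (simp add: mult_le_cancel_left)
        qed
      qed simp
      have "ip d z = ip d r" using r1 r2 by simp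
      then show ?thesis unfolding d_def ip_axis using eq by simp
    qed
    then have "z = r" by (simp add: vec_eq_iff)
    then show ?thesis using rF by simp
  qed
  then show ?thesis unfolding dense_in_def F_def by blast
qed

theorem proposition2:
  fixes s :: "('w::finite set \<Rightarrow> real) \<Rightarrow> ('w \<Rightarrow> ereal)" and M :: real
  assumes bounded: "\<forall>c \<omega>. s c \<omega> \<le> ereal M"
    and qsp: "quasi_strictly_proper s"
    and cont: "continuous_on UNIV s"
  shows "(\<exists>p\<in>Probs. \<bar>expect p (s p)\<bar> = \<infinity>) \<or>
    ((\<forall>(ps :: nat \<Rightarrow> ('w set \<Rightarrow> real)) p.
        (\<forall>n. ps n \<in> Probs) \<and> p \<in> Probs \<and> (\<forall>\<omega>. (\<lambda>n. ps n {\<omega>}) \<longlonglongrightarrow> p {\<omega>}) \<and>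
        (\<forall>n. finite_score (s (ps n))) \<and> \<not> finite_score (s p)
        \<longrightarrow> (\<lambda>n. expect (ps n) (s (ps n))) \<longlonglongrightarrow> expect p (s p)) \<and>
     dense_in (finite_prob_scores s) (pos_boundary (convex hull (finite_prob_scores s))))"
proof (cases "\<exists>p\<in>Probs. \<bar>expect p (s p)\<bar> = \<infinity>")
  case True then show ?thesis by blast
next
  case False
  then have H: "\<And>p. p \<in> Probs \<Longrightarrow> \<bar>expect p (s p)\<bar> \<noteq> \<infinity>" by (metis)
  have prp: "\<And>p c. p \<in> Probs \<Longrightarrow> expect p (s c) \<le> expect p (s p)"
    using qsp unfolding quasi_strictly_proper_def proper_def by blast
  show ?thesis
  proof (intro disjI2 conjI allI impI)
    fix ps :: "nat \<Rightarrow> ('w set \<Rightarrow> real)" and p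
    assume "(\<forall>n. ps n \<in> Probs) \<and> p \<in> Probs \<and> (\<forall>\<omega>. (\<lambda>n. ps n {\<omega>}) \<longlonglongrightarrow> p {\<omega>}) \<and>
        (\<forall>n. finite_score (s (ps n))) \<and> \<not> finite_score (s p)"
    then show "(\<lambda>n. expect (ps n) (s (ps n))) \<longlonglongrightarrow> expect p (s p)"
      using part1[OF bounded prp cont H] by blast
  next
    show "dense_in (finite_prob_scores s) (pos_boundary (convex hull (finite_prob_scores s)))"
      using part2[OF bounded prp cont H] by blast
  qed
qed

end
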